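(* Fix a master $m$ with $L_m>0$ and a finite nonempty set $\Omega_m$ of workers serving it, with parameters $u_{m,n}>0$, $a_{m,n}>0$ for $n\in\Omega_m$. Consider the problem $$\min_{\{l_{m,n}\}_{n\in\Omega_m},\,t_m} \; t_m \quad\text{s.t.}\quad L_m-\sum_{n\in\Omega_m} l_{m,n}\left(1-e^{-\frac{u_{m,n}}{l_{m,n}}\left(t_m-a_{m,n}l_{m,n}\right)}\right)\le 0,\qquad l_{m,n}\ge 0\ \ \forall n\in\Omega_m.$$ For each $n\in\Omega_m$ define $$\phi_{m,n}=\frac{1}{u_{m,n}}\left[-\mathcal{W}_{-1}\!\left(-e^{-u_{m,n}a_{m,n}-1}\right)-1\right],$$ where $\mathcal{W}_{-1}$ is the lower branch of the Lambert W function (i.e. for $x\le -1$, $\mathcal{W}_{-1}(xe^x)=x$). Then the optimal load allocation and the minimum approximate completion time are $$l^*_{m,n}=\frac{L_m}{\phi_{m,n}\sum_{n'\in \Omega_m} \frac{u_{m,n'}}{1+u_{m,n'}\phi_{m,n'}}},\qquad t_m^*= \frac{L_m}{\sum_{n'\in \Omega_m} \frac{u_{m,n'}}{1+u_{m,n'}\phi_{m,n'}}}.$$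
   Context: Setting: master $m$ needs $L_m$ results (products of MDS-coded rows of its matrix with its vector); worker $n\in\Omega_m$ is allocated $l_{m,n}$ coded rows, and the time for worker $n$ to process $l$ rows is a shifted exponential random variable with $\mathbb{P}[T\le t]=1-e^{-\frac{u_{m,n}}{l}(t-a_{m,n}l)}$ for $t\ge a_{m,n}l$ and $0$ otherwise. The constraint says the expected number of results received by time $t_m$ is at least $L_m$; load values are treated as nonnegative reals. *)

theory Defs
  imports Complex_Main
begin

definition lambertW_m1 :: "real \<Rightarrow> real" where
  "lambertW_m1 y = (THE x. x \<le> -1 \<and> x * exp x = y)"

definition feasible ::
  "'w set \<Rightarrow> ('w \<Rightarrow> real) \<Rightarrow> ('w \<Rightarrow> real) \<Rightarrow> real \<Rightarrow> ('w \<Rightarrow> real) \<Rightarrow> real \<Rightarrow> bool" where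
  "feasible \<Omega> u a L l t \<longleftrightarrow>
     L - (\<Sum>n\<in>\<Omega>. l n * (1 - exp (- (u n / l n) * (t - a n * l n)))) \<le> 0
     \<and> (\<forall>n\<in>\<Omega>. l n \<ge> 0)"

definition phi :: "real \<Rightarrow> real \<Rightarrow> real" where
  "phi u a = (1 / u) * (- lambertW_m1 (- exp (- u * a - 1)) - 1)"

end

theory Submission
  imports Defs
begin
lemma exp_strict: fixes x::real assumes "x \<noteq> 0" shows "1 + x < exp x"
proof (cases "1 + x/2 \<ge> 0")
  case True
  have "1 + x/2 \<le> exp (x/2)" by (rule exp_ge_add_one_self)
  hence "(1 + x/2)^2 \<le> exp (x/2) ^2" using True by (intro power_mono) auto
  also have "exp (x/2)^2 = exp x" by (simp add: power2_eq_square flip: exp_add)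
  finally have "(1 + x/2)^2 \<le> exp x" .
  moreover have "1 + x < (1 + x/2)^2"
  proof -
    have "0 < x*x" using assms by (auto simp add: zero_less_mult_iff linorder_neq_iff)
    moreover have "(1+x/2)^2 = 1 + x + x*x/4" by (simp add: power2_eq_square algebra_simps)
    ultimately show ?thesis by simp
  qed
  ultimately show ?thesis by linarith
next
  case False
  then have "1 + x < 0" by linarith
  then show ?thesis using exp_gt_zero[of x] by linarith
qed

lemma lw:
  fixes K :: real assumes K: "K > 1"
  shows "lambertW_m1 (- exp (-K)) < -1 \<and> lambertW_m1 (- exp (-K)) * exp (lambertW_m1 (- exp (-K))) = - exp (-K)"
proof -
  let ?c = "- exp (-K)"
  have e2: "2*K \<le> exp K"
  proof -
    have "1 + K/2 \<le> exp (K/2)" by (rule exp_ge_add_one_self)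
    hence "(1 + K/2)^2 \<le> exp (K/2) ^2" using K by (intro power_mono) auto
    also have "exp (K/2)^2 = exp K" by (simp add: power2_eq_square flip: exp_add)
    finally have "(1 + K/2)^2 \<le> exp K" .
    moreover have "2*K \<le> (1 + K/2)^2" using sum_squares_ge_zero[of "1 - K/2" 0]
      by (simp add: power2_eq_square field_simps)
    ultimately show ?thesis by linarith
  qed
  have ex: "\<exists>x\<ge>-2*K. x \<le> -1 \<and> x * exp x = ?c"
  proof (rule IVT2)
    have "exp (-K) < exp (-1)" using K by simp
    then show "(-1) * exp (-1::real) \<le> ?c" by simp
    have "2*K * exp (-2*K) \<le> exp K * exp (-2*K)" using e2 by (intro mult_right_mono) auto
    also have "exp K * exp (-2*K) = exp (-K)" by (simp flip: exp_add)
    finally show "?c \<le> (-2*K) * exp (-2*K)" by simp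
    show "-2*K \<le> -1" using K by simp
    show "\<forall>x. - 2 * K \<le> x \<and> x \<le> - 1 \<longrightarrow> isCont (\<lambda>x. x * exp x) x" by (auto intro!: continuous_intros)
  qed
  have uniq: "x1 = x2" if h: "x1 \<le> -1" "x2 \<le> -1" "x1 * exp x1 = x2 * exp x2" for x1 x2 :: real
  proof (rule ccontr)
    assume ne: "x1 \<noteq> x2"
    have key: False if l: "p < q" "q \<le> -1" "p * exp p = q * exp q" for p q :: real
    proof -
      define d where "d = q - p"
      have d: "d > 0" using l d_def by simp
      have "p * exp p = q * exp p * exp d" using l(3) by (simp add: d_def flip: exp_add)
      hence "p = q * exp d" by simp
      have "1 + d < exp d" using d exp_strict by auto
      hence "q * exp d < q * (1 + d)" using l by (intro mult_strict_left_mono_neg) auto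
      also have "q * (1+d) \<le> q + -d" using l d proof -
        have "d*(1+q) \<le> 0" using l d by (intro mult_nonneg_nonpos) auto
        thus ?thesis by (simp add: algebra_simps)
      qed
      finally show False using \<open>p = q * exp d\<close> d_def by linarith
    qed
    show False
    proof (cases "x1 < x2")
      case True thus ?thesis using key h by blast
    next
      case False thus ?thesis using key[of x2 x1] h ne by simp
    qed
  qed
  have ex1: "\<exists>!x. x \<le> -1 \<and> x * exp x = ?c"
  proof -
    from ex obtain x where x: "x \<le> -1" "x * exp x = ?c" by blast
    show ?thesis
    proof (rule ex1I[of _ x])
      show "x \<le> -1 \<and> x * exp x = ?c" using x by simp
      fix y assume "y \<le> -1 \<and> y * exp y = ?c"
      thus "y = x" using uniq[of y x] x by simp
    qed
  qed
  have P: "lambertW_m1 ?c \<le> -1 \<and> lambertW_m1 ?c * exp (lambertW_m1 ?c) = ?c"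
    unfolding lambertW_m1_def by (rule theI'[OF ex1])
  moreover have "lambertW_m1 ?c \<noteq> -1"
  proof
    assume "lambertW_m1 ?c = -1"
    with P have "exp (-1) = exp (-K)" by simp
    thus False using K by simp
  qed
  ultimately show ?thesis by linarith
qed

lemma phi_props:
  fixes u a :: real assumes u: "u > 0" and a: "a > 0"
  shows "phi u a > 0 \<and> exp (u*a) * (1 + u * phi u a) = exp (u * phi u a)"
proof -
  define K where "K = u*a + 1"
  have K: "K > 1" using u a by (simp add: K_def)
  define y where "y = lambertW_m1 (- exp (-K))"
  have Y: "y < -1" "y * exp y = - exp (-K)" using lw[OF K] by (auto simp: y_def)
  have mk: "- u * a - 1 = -K" by (simp add: K_def)
  have ph: "phi u a = (-y-1)/u" unfolding phi_def mk y_def by simp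
  have up: "u * phi u a = -y-1" using u ph by simp
  have pos: "phi u a > 0" using ph Y u by simp
  have "(-y) * exp y * exp K = 1" using Y(2) by (simp flip: exp_add)
  hence "exp (u*a) * (-y) * (exp y * exp 1) = exp (u*a) * (-y) * exp y * exp 1" by simp
  have "exp (u*a) * (1 + u * phi u a) * exp (y+1) = (-y) * exp y * exp K"
    by (simp add: up K_def exp_add algebra_simps)
  also have "\<dots> = 1" by fact
  also have "1 = exp (u * phi u a) * exp (y+1)" by (simp add: up flip: exp_add)
  finally have "exp (u*a) * (1 + u * phi u a) = exp (u * phi u a)" by simp
  with pos show ?thesis by simp
qed

lemma term_eq:
  fixes u a f l t :: real
  assumes u: "u > 0" and f: "f > 0" and E: "exp (u*a) * (1 + u*f) = exp (u*f)" and l: "l > 0"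
  shows "l*(1 - exp(-(u/l)*(t - a*l))) = t*(u/(1+u*f)) - l*(exp (u*(f - t/l)) - (1 + u*(f - t/l)))/(1+u*f)"
proof -
  have d: "1 + u*f > 0" using u f by (simp add: add_pos_pos)
  have e1: "exp(-(u/l)*(t - a*l)) = exp (u*a) * exp (-(u*t/l))"
    using l by (simp add: algebra_simps flip: exp_add)
  have e2: "exp (u*(f - t/l)) = exp (u*f) * exp (-(u*t/l))"
    by (simp add: algebra_simps flip: exp_add)
  have ea: "exp (u*a) = exp (u*f) / (1+u*f)" using E d by (simp add: field_simps)
  have "l*(1 - exp (u*f) / (1+u*f) * X) = t*(u/(1+u*f)) - l*(exp (u*f) * X - (1 + u*(f - t/l)))/(1+u*f)" for X
  proof -
    have a1: "l*(exp (u*f) * X - (1 + u*(f - t/l))) = l*exp (u*f)*X - l - l*u*f + u*t"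
      using l by (simp add: algebra_simps)
    have "t*(u/(1+u*f)) - l*(exp (u*f) * X - (1 + u*(f - t/l)))/(1+u*f)
       = (t*u - (l*exp (u*f)*X - l - l*u*f + u*t))/(1+u*f)" unfolding a1 by (simp only: diff_divide_distrib times_divide_eq_right)
    also have "\<dots> = (l*(1+u*f) - l*exp (u*f)*X)/(1+u*f)" by (rule arg_cong[where f="\<lambda>z. z/(1+u*f)"]) (simp add: algebra_simps)
    also have "\<dots> = l - l*exp (u*f)*X/(1+u*f)" using d by (simp add: diff_divide_distrib)
    also have "\<dots> = l*(1 - exp (u*f) / (1+u*f) * X)" by (simp add: algebra_simps)
    finally show ?thesis by simp
  qed
  then show ?thesis unfolding e1 e2 ea .
qed

lemma term_le:
  fixes u a f l t :: real
  assumes u: "u > 0" and f: "f > 0" and E: "exp (u*a) * (1 + u*f) = exp (u*f)" and l: "l > 0"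
  shows "l*(1 - exp(-(u/l)*(t - a*l))) \<le> t*(u/(1+u*f))"
    and "l*(1 - exp(-(u/l)*(t - a*l))) = t*(u/(1+u*f)) \<Longrightarrow> l * f = t"
proof -
  have d: "1 + u*f > 0" using u f by (simp add: add_pos_pos)
  define w where "w = u*(f - t/l)"
  have eq: "l*(1 - exp(-(u/l)*(t - a*l))) = t*(u/(1+u*f)) - l*(exp w - (1 + w))/(1+u*f)"
    unfolding w_def by (rule term_eq[OF u f E l])
  have "exp w - (1+w) \<ge> 0" using exp_ge_add_one_self[of w] by simp
  hence "l*(exp w - (1 + w))/(1+u*f) \<ge> 0" using l d by simp
  with eq show "l*(1 - exp(-(u/l)*(t - a*l))) \<le> t*(u/(1+u*f))" by linarith
  assume h: "l*(1 - exp(-(u/l)*(t - a*l))) = t*(u/(1+u*f))"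
  have "l*(exp w - (1 + w))/(1+u*f) = 0" using h eq by linarith
  hence "exp w = 1 + w" using l d by simp
  hence "w = 0" using exp_strict[of w] by (cases "w = 0") auto
  hence "f = t/l" using u by (simp add: w_def)
  thus "l * f = t" using l by simp
qed

theorem theorem1:
  fixes \<Omega> :: "'w set" and u a :: "'w \<Rightarrow> real" and L :: real
  assumes "finite \<Omega>" and "\<Omega> \<noteq> {}" and "L > 0"
    and "\<forall>n\<in>\<Omega>. u n > 0" and "\<forall>n\<in>\<Omega>. a n > 0"
  defines "S \<equiv> (\<Sum>n'\<in>\<Omega>. u n' / (1 + u n' * phi (u n') (a n')))"
  defines "lstar \<equiv> (\<lambda>n. L / (phi (u n) (a n) * S))"
  defines "tstar \<equiv> L / S"
  shows "feasible \<Omega> u a L lstar tstar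
    \<and> (\<forall>l t. feasible \<Omega> u a L l t \<longrightarrow> tstar \<le> t)
    \<and> (\<forall>l. feasible \<Omega> u a L l tstar \<longrightarrow> (\<forall>n\<in>\<Omega>. l n = lstar n))"
proof -
  note fin = assms(1) and ne = assms(2) and L = assms(3) and up = assms(4) and ap = assms(5)
  define F where "F = (\<lambda>n. phi (u n) (a n))"
  define c where "c = (\<lambda>n. u n / (1 + u n * F n))"
  define T where "T = (\<lambda>l t n. l n * (1 - exp (- (u n / l n) * (t - a n * l n))))"
  have Fp: "F n > 0" "exp (u n * a n) * (1 + u n * F n) = exp (u n * F n)" if "n \<in> \<Omega>" for n
    using phi_props[of "u n" "a n"] up ap that by (auto simp: F_def)
  have cp: "c n > 0" if "n \<in> \<Omega>" for n
    using Fp[OF that] up that by (auto simp: c_def intro!: divide_pos_pos add_pos_pos)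
  have S: "S = sum c \<Omega>" by (simp add: S_def c_def F_def)
  have Sp: "S > 0" unfolding S using cp fin ne by (simp add: sum_pos)
  have feas: "feasible \<Omega> u a L l t \<longleftrightarrow> L \<le> sum (T l t) \<Omega> \<and> (\<forall>n\<in>\<Omega>. l n \<ge> 0)" for l t
    by (simp add: feasible_def T_def)
  have Tle: "T l t n \<le> t * c n" if "n \<in> \<Omega>" "l n > 0" for l t n
    using term_le(1)[OF _ Fp[OF that(1)] that(2), of t] up that by (simp add: T_def c_def)
  have Teq: "l n * F n = t" if "n \<in> \<Omega>" "l n > 0" "T l t n = t * c n" for l t n
    using term_le(2)[OF _ Fp[OF that(1)] that(2), of t] up that by (simp add: T_def c_def)
  have T0: "T l t n = 0" if "l n = 0" for l t n using that by (simp add: T_def)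
  have Tle': "T l t n \<le> t * c n" if "n \<in> \<Omega>" "l n \<ge> 0" "t \<ge> 0" for l t n
  proof (cases "l n = 0")
    case True thus ?thesis using T0 cp[OF that(1)] that by simp
  next
    case False thus ?thesis using Tle that by simp
  qed
  have lst: "lstar n = tstar / F n" for n by (simp add: lstar_def tstar_def F_def)
  have tsp: "tstar > 0" using L Sp by (simp add: tstar_def)
  have tS: "tstar * S = L" using Sp by (simp add: tstar_def)
  have P1: "feasible \<Omega> u a L lstar tstar"
  proof -
    have "T lstar tstar n = tstar * c n" if "n \<in> \<Omega>" for n
    proof -
      have lp: "lstar n > 0" using Fp[OF that] tsp lst by simp
      have "lstar n * F n = tstar" using Fp[OF that] lst by simp
      hence e: "tstar / lstar n = F n" using lp by (simp add: field_simps)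
      have "exp (- (u n / lstar n) * (tstar - a n * lstar n)) = exp (u n * a n) * exp (- (u n * (tstar / lstar n)))"
        using lp by (simp add: algebra_simps flip: exp_add)
      also have "\<dots> = 1 / (1 + u n * F n)"
      proof -
        have d: "1 + u n * F n > 0" using Fp[OF that] up that by (simp add: add_pos_pos)
        have ea: "exp (u n * a n) = exp (u n * F n) / (1 + u n * F n)"
          using Fp(2)[OF that] d by (simp add: eq_divide_eq)
        have "exp (u n * F n) * exp (- (u n * F n)) = 1" by (simp flip: exp_add)
        thus ?thesis unfolding e ea by simp
      qed
      finally have "T lstar tstar n = lstar n * (1 - 1 / (1 + u n * F n))" by (simp add: T_def)
      also have "\<dots> = lstar n * (u n * F n) / (1 + u n * F n)"
      proof -
        have d: "1 + u n * F n > 0" using Fp[OF that] up that by (simp add: add_pos_pos)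
        have "1 - 1 / (1 + u n * F n) = (u n * F n) / (1 + u n * F n)"
          using d by (simp add: diff_divide_eq_iff)
        thus ?thesis by simp
      qed
      also have "\<dots> = tstar * c n" using \<open>lstar n * F n = tstar\<close> by (simp add: c_def algebra_simps)
      finally show ?thesis .
    qed
    hence "sum (T lstar tstar) \<Omega> = tstar * S" unfolding S by (simp add: sum_distrib_left)
    moreover have "\<forall>n\<in>\<Omega>. lstar n \<ge> 0" using Fp tsp lst by (simp add: less_imp_le)
    ultimately show ?thesis unfolding feas using tS by simp
  qed
  have bound: "sum (T l t) \<Omega> \<le> t * S" if "t \<ge> 0" "\<forall>n\<in>\<Omega>. l n \<ge> 0" for l t
  proof -
    have "sum (T l t) \<Omega> \<le> sum (\<lambda>n. t * c n) \<Omega>" using Tle' that by (intro sum_mono) auto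
    thus ?thesis unfolding S by (simp add: sum_distrib_left)
  qed
  have P2: "tstar \<le> t" if fe: "feasible \<Omega> u a L l t" for l t
  proof -
    from fe have Ls: "L \<le> sum (T l t) \<Omega>" and nn: "\<forall>n\<in>\<Omega>. l n \<ge> 0" unfolding feas by auto
    have tp: "t > 0"
    proof (rule ccontr)
      assume "\<not> t > 0"
      hence tn: "t \<le> 0" by simp
      have "T l t n \<le> 0" if "n \<in> \<Omega>" for n
      proof (cases "l n = 0")
        case True thus ?thesis using T0 by simp
      next
        case False
        hence "l n > 0" using nn that by (simp add: less_le)
        hence "T l t n \<le> t * c n" using Tle that by simp
        also have "\<dots> \<le> 0" using tn cp[OF that] by (simp add: mult_nonpos_nonneg)
        finally show ?thesis .
      qed
      hence "sum (T l t) \<Omega> \<le> 0" by (intro sum_nonpos) auto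
      thus False using Ls L by simp
    qed
    have "L \<le> t * S" using Ls bound[of t l] tp nn by simp
    thus ?thesis unfolding tstar_def using Sp by (simp add: pos_divide_le_eq)
  qed
  have P3: "l n = lstar n" if fe: "feasible \<Omega> u a L l tstar" and n: "n \<in> \<Omega>" for l n
  proof (rule ccontr)
    assume neq: "l n \<noteq> lstar n"
    from fe have Ls: "L \<le> sum (T l tstar) \<Omega>" and nn: "\<forall>n\<in>\<Omega>. l n \<ge> 0" unfolding feas by auto
    have lt: "T l tstar n < tstar * c n"
    proof (cases "l n = 0")
      case True thus ?thesis using T0 tsp cp[OF n] by simp
    next
      case False
      hence lp: "l n > 0" using nn n by (simp add: less_le)
      have "T l tstar n \<noteq> tstar * c n"
      proof
        assume "T l tstar n = tstar * c n"
        hence "l n * F n = tstar" using Teq n lp by blast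
        hence "l n = lstar n" using Fp[OF n] lst by (simp add: field_simps)
        thus False using neq by simp
      qed
      thus ?thesis using Tle[of n l tstar] n lp by simp
    qed
    have "sum (T l tstar) \<Omega> < sum (\<lambda>n. tstar * c n) \<Omega>"
      using fin Tle'[of _ l tstar] nn tsp lt n by (intro sum_strict_mono_ex1) auto
    also have "\<dots> = L" using tS unfolding S by (simp add: sum_distrib_left)
    finally show False using Ls by simp
  qed
  show ?thesis using P1 P2 P3 by blast
qed

end
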